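(* Let $E[\mathscr{T}]$ be a stable locally $L^0$-convex module and let $E^\ast$ be the set of all continuous $L^0$-module morphisms $\mu:E\rightarrow L^0$. The collection of sets \[ U_{\{F_k\},\{A_k\},\varepsilon}:=\{x\in E\colon \sum 1_{A_k}\underset{\mu\in F_k}{\operatorname{ess\,sup}}|\mu(x)|<\varepsilon\}, \] where $\{A_k\}\in p(\Omega)$, $\{F_k\}$ is a countable collection of non-empty finite subsets of $E^\ast$ and $\varepsilon\in L^0$ with $\varepsilon>0$, is a neighborhood base of $0\in E$ for a stable locally $L^0$-convex topology (called the stable weak topology $\sigma_s(E,E^\ast)$).
   Context: $(\Omega,\Sigma,\mathbb{P})$ is a probability space, $L^0$ is the set of equivalence classes (modulo a.s. equality) of $\Sigma$-measurable real random variables, $\mathcal{F}$ is the associated measure algebra, and $p(\Omega)$ denotes the set of (countable) partitions of $\Omega$ in $\mathcal{F}$. An $L^0$-module $E$ has the countable concatenation property if for every sequence $\{x_k\}\subset E$ and every partition $\{A_k\}\in p(\Omega)$ there is a unique $x=\sum 1_{A_k}x_k\in E$ with $1_{A_k}x=1_{A_k}x_k$ for all $k$. A subset $S$ is stable if $\sum 1_{A_k}x_k\in S$ for all $\{x_k\}\subset S$, $\{A_k\}\in p(\Omega)$; a collection $\mathscr{C}$ of subsets is stable if each member is stable and $\sum 1_{A_k}S_k\in\mathscr{C}$ for all $\{S_k\}\subset\mathscr{C}$, $\{A_k\}\in p(\Omega)$. A stable locally $L^0$-convex module is a topological $L^0$-module with the countable concatenation property having a neighborhood base of $0$ which is a stable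 collection of $L^0$-convex, $L^0$-absorbing and $L^0$-balanced sets. $\operatorname{ess\,sup}$ denotes the essential supremum in $L^0$. *)

theory Defs
  imports "HOL-Probability.Probability"
begin

text \<open>Elements of L0 are represented by Borel measurable real functions on the
probability space M; all comparisons are almost sure.  The module E is the whole
type 'e (an abelian group) with an L0-scalar multiplication sm acting on
representatives, required to respect a.s. equality of scalars.\<close>

text \<open>Countable partitions in the measure algebra, represented by pointwise disjoint
measurable families covering the sample space (finite partitions are padded with
empty sets).\<close>
definition is_partition :: "'w measure \<Rightarrow> (nat \<Rightarrow> 'w set) \<Rightarrow> bool" where
  "is_partition M A \<longleftrightarrow> (\<forall>k. A k \<in> sets M) \<and> disjoint_family A \<and> (\<Union>k. A k) = space M"

definition L0_top :: "'w measure \<Rightarrow> ('w \<Rightarrow> real) topology" where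
  "L0_top M = topology (\<lambda>U. U \<subseteq> borel_measurable M \<and>
     (\<forall>f\<in>U. \<exists>e\<in>borel_measurable M. (AE \<omega> in M. 0 < e \<omega>) \<and>
        {g \<in> borel_measurable M. AE \<omega> in M. \<bar>g \<omega> - f \<omega>\<bar> < e \<omega>} \<subseteq> U))"

definition L0_esssup :: "'w measure \<Rightarrow> ('w \<Rightarrow> real) set \<Rightarrow> ('w \<Rightarrow> real)" where
  "L0_esssup M S = (SOME y. y \<in> borel_measurable M \<and> (\<forall>f\<in>S. AE \<omega> in M. f \<omega> \<le> y \<omega>) \<and>
     (\<forall>z\<in>borel_measurable M. (\<forall>f\<in>S. AE \<omega> in M. f \<omega> \<le> z \<omega>) \<longrightarrow> (AE \<omega> in M. y \<omega> \<le> z \<omega>)))"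

definition L0_concat :: "(nat \<Rightarrow> 'w set) \<Rightarrow> (nat \<Rightarrow> 'w \<Rightarrow> real) \<Rightarrow> 'w \<Rightarrow> real" where
  "L0_concat A y = (\<lambda>\<omega>. \<Sum>k. indicator (A k) \<omega> * y k \<omega>)"

definition L0_module :: "'w measure \<Rightarrow> (('w \<Rightarrow> real) \<Rightarrow> 'e::ab_group_add \<Rightarrow> 'e) \<Rightarrow> bool" where
  "L0_module M sm \<longleftrightarrow>
     (\<forall>f g x. f \<in> borel_measurable M \<longrightarrow> g \<in> borel_measurable M \<longrightarrow>
        (AE \<omega> in M. f \<omega> = g \<omega>) \<longrightarrow> sm f x = sm g x) \<and>
     (\<forall>f x y. f \<in> borel_measurable M \<longrightarrow> sm f (x + y) = sm f x + sm f y) \<and>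
     (\<forall>f g x. f \<in> borel_measurable M \<longrightarrow> g \<in> borel_measurable M \<longrightarrow>
        sm (\<lambda>\<omega>. f \<omega> + g \<omega>) x = sm f x + sm g x) \<and>
     (\<forall>f g x. f \<in> borel_measurable M \<longrightarrow> g \<in> borel_measurable M \<longrightarrow>
        sm (\<lambda>\<omega>. f \<omega> * g \<omega>) x = sm f (sm g x)) \<and>
     (\<forall>x. sm (\<lambda>\<omega>. 1) x = x)"

definition topological_L0_module ::
  "'w measure \<Rightarrow> (('w \<Rightarrow> real) \<Rightarrow> 'e::ab_group_add \<Rightarrow> 'e) \<Rightarrow> 'e topology \<Rightarrow> bool" where
  "topological_L0_module M sm T \<longleftrightarrow> L0_module M sm \<and> topspace T = UNIV \<and>
     continuous_map (prod_topology T T) T (\<lambda>(x, y). x + y) \<and>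
     continuous_map (prod_topology (L0_top M) T) T (\<lambda>(f, x). sm f x)"

definition countable_concatenation ::
  "'w measure \<Rightarrow> (('w \<Rightarrow> real) \<Rightarrow> 'e::ab_group_add \<Rightarrow> 'e) \<Rightarrow> bool" where
  "countable_concatenation M sm \<longleftrightarrow>
     (\<forall>A x. is_partition M A \<longrightarrow>
        (\<exists>!z. \<forall>k. sm (indicator (A k)) z = sm (indicator (A k)) (x k)))"

definition E_concat ::
  "(('w \<Rightarrow> real) \<Rightarrow> 'e::ab_group_add \<Rightarrow> 'e) \<Rightarrow> (nat \<Rightarrow> 'w set) \<Rightarrow> (nat \<Rightarrow> 'e) \<Rightarrow> 'e" where
  "E_concat sm A x = (THE z. \<forall>k. sm (indicator (A k)) z = sm (indicator (A k)) (x k))"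

definition stable_set ::
  "'w measure \<Rightarrow> (('w \<Rightarrow> real) \<Rightarrow> 'e::ab_group_add \<Rightarrow> 'e) \<Rightarrow> 'e set \<Rightarrow> bool" where
  "stable_set M sm S \<longleftrightarrow>
     (\<forall>A x. is_partition M A \<longrightarrow> (\<forall>k. x k \<in> S) \<longrightarrow> E_concat sm A x \<in> S)"

definition set_concat ::
  "(('w \<Rightarrow> real) \<Rightarrow> 'e::ab_group_add \<Rightarrow> 'e) \<Rightarrow> (nat \<Rightarrow> 'w set) \<Rightarrow> (nat \<Rightarrow> 'e set) \<Rightarrow> 'e set" where
  "set_concat sm A S = {E_concat sm A x | x. \<forall>k. x k \<in> S k}"

definition stable_collection ::
  "'w measure \<Rightarrow> (('w \<Rightarrow> real) \<Rightarrow> 'e::ab_group_add \<Rightarrow> 'e) \<Rightarrow> 'e set set \<Rightarrow> bool" where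
  "stable_collection M sm C \<longleftrightarrow> (\<forall>S\<in>C. stable_set M sm S) \<and>
     (\<forall>A S. is_partition M A \<longrightarrow> (\<forall>k. S k \<in> C) \<longrightarrow> set_concat sm A S \<in> C)"

definition L0_convex ::
  "'w measure \<Rightarrow> (('w \<Rightarrow> real) \<Rightarrow> 'e::ab_group_add \<Rightarrow> 'e) \<Rightarrow> 'e set \<Rightarrow> bool" where
  "L0_convex M sm C \<longleftrightarrow> (\<forall>x\<in>C. \<forall>y\<in>C. \<forall>l\<in>borel_measurable M.
     (AE \<omega> in M. 0 \<le> l \<omega> \<and> l \<omega> \<le> 1) \<longrightarrow> sm l x + sm (\<lambda>\<omega>. 1 - l \<omega>) y \<in> C)"

definition L0_absorbing ::
  "'w measure \<Rightarrow> (('w \<Rightarrow> real) \<Rightarrow> 'e::ab_group_add \<Rightarrow> 'e) \<Rightarrow> 'e set \<Rightarrow> bool" where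
  "L0_absorbing M sm C \<longleftrightarrow> (\<forall>x. \<exists>l\<in>borel_measurable M.
     (AE \<omega> in M. 0 < l \<omega>) \<and> (\<exists>c\<in>C. x = sm l c))"

definition L0_balanced ::
  "'w measure \<Rightarrow> (('w \<Rightarrow> real) \<Rightarrow> 'e::ab_group_add \<Rightarrow> 'e) \<Rightarrow> 'e set \<Rightarrow> bool" where
  "L0_balanced M sm C \<longleftrightarrow> (\<forall>x\<in>C. \<forall>l\<in>borel_measurable M.
     (AE \<omega> in M. \<bar>l \<omega>\<bar> \<le> 1) \<longrightarrow> sm l x \<in> C)"

definition nhds_base :: "'e topology \<Rightarrow> 'e \<Rightarrow> 'e set set \<Rightarrow> bool" where
  "nhds_base T a U \<longleftrightarrow>
     (\<forall>V\<in>U. \<exists>W. openin T W \<and> a \<in> W \<and> W \<subseteq> V) \<and>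
     (\<forall>W. openin T W \<and> a \<in> W \<longrightarrow> (\<exists>V\<in>U. V \<subseteq> W))"

definition stable_lc_L0_module ::
  "'w measure \<Rightarrow> (('w \<Rightarrow> real) \<Rightarrow> 'e::ab_group_add \<Rightarrow> 'e) \<Rightarrow> 'e topology \<Rightarrow> bool" where
  "stable_lc_L0_module M sm T \<longleftrightarrow> topological_L0_module M sm T \<and>
     countable_concatenation M sm \<and>
     (\<exists>U. nhds_base T 0 U \<and> stable_collection M sm U \<and>
        (\<forall>V\<in>U. L0_convex M sm V \<and> L0_absorbing M sm V \<and> L0_balanced M sm V))"

definition L0_dual ::
  "'w measure \<Rightarrow> (('w \<Rightarrow> real) \<Rightarrow> 'e::ab_group_add \<Rightarrow> 'e) \<Rightarrow> 'e topology \<Rightarrow> ('e \<Rightarrow> 'w \<Rightarrow> real) set" where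
  "L0_dual M sm T = {\<mu>. (\<forall>x. \<mu> x \<in> borel_measurable M) \<and>
     (\<forall>x y. AE \<omega> in M. \<mu> (x + y) \<omega> = \<mu> x \<omega> + \<mu> y \<omega>) \<and>
     (\<forall>f x. f \<in> borel_measurable M \<longrightarrow> (AE \<omega> in M. \<mu> (sm f x) \<omega> = f \<omega> * \<mu> x \<omega>)) \<and>
     continuous_map T (L0_top M) \<mu>}"

definition weak_nbhd ::
  "'w measure \<Rightarrow> (nat \<Rightarrow> ('e \<Rightarrow> 'w \<Rightarrow> real) set) \<Rightarrow> (nat \<Rightarrow> 'w set) \<Rightarrow> ('w \<Rightarrow> real) \<Rightarrow> 'e set" where
  "weak_nbhd M F A e = {x. AE \<omega> in M.
     L0_concat A (\<lambda>k. L0_esssup M ((\<lambda>\<mu> \<omega>'. \<bar>\<mu> x \<omega>'\<bar>) ` F k)) \<omega> < e \<omega>}"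

end

theory Submission
  imports Defs
begin

lemma partition_ex:
  assumes "is_partition M A" "\<omega> \<in> space M"
  shows "\<exists>k. \<omega> \<in> A k"
  using assms unfolding is_partition_def by auto

lemma L0_concat_at:
  assumes "is_partition M A" "\<omega> \<in> A k"
  shows "L0_concat A y \<omega> = y k \<omega>"
proof -
  have "\<And>j. indicator (A j) \<omega> * y j \<omega> = (if j = k then y k \<omega> else 0)"
    using assms unfolding is_partition_def disjoint_family_on_def by (auto simp: indicator_def)
  moreover have "(\<lambda>j. if j = k then y k \<omega> else 0) = (\<lambda>r. if r = k then y r \<omega> else 0)" by auto
  ultimately have "(\<lambda>j. indicator (A j) \<omega> * y j \<omega>) sums y k \<omega>"
    using sums_single[of k "\<lambda>j. y j \<omega>"] by simp
  then show ?thesis unfolding L0_concat_def by (simp add: sums_iff)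
qed

lemma AE_partition:
  assumes "is_partition M A" "\<And>k. AE \<omega> in M. \<omega> \<in> A k \<longrightarrow> P \<omega>"
  shows "AE \<omega> in M. P \<omega>"
proof -
  have "AE \<omega> in M. \<forall>k. \<omega> \<in> A k \<longrightarrow> P \<omega>"
    by (rule AE_all_countable[THEN iffD2]) (use assms(2) in blast)
  then show ?thesis using AE_space
    by eventually_elim (use partition_ex[OF assms(1)] in blast)
qed

lemma L0_concat_meas:
  assumes "is_partition M A" "\<And>k. y k \<in> borel_measurable M"
  shows "L0_concat A y \<in> borel_measurable M"
proof -
  have "\<And>k. A k \<in> sets M" using assms(1) unfolding is_partition_def by auto
  then show ?thesis unfolding L0_concat_def
    by (intro borel_measurable_suminf borel_measurable_times borel_measurable_indicator assms(2))
qed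

lemma esssup_props:
  fixes S :: "('w \<Rightarrow> real) set"
  assumes "finite S" "S \<noteq> {}" "S \<subseteq> borel_measurable M"
  shows "(AE \<omega> in M. L0_esssup M S \<omega> \<le> Max ((\<lambda>f. f \<omega>) ` S))"
    and "\<And>f. f \<in> S \<Longrightarrow> AE \<omega> in M. f \<omega> \<le> L0_esssup M S \<omega>"
proof -
  define m where "m = (\<lambda>\<omega>. Max ((\<lambda>f. f \<omega>) ` S))"
  have mm: "m \<in> borel_measurable M" unfolding m_def
    by (rule borel_measurable_Max) (use assms in auto)
  have ub: "\<forall>f\<in>S. AE \<omega> in M. f \<omega> \<le> m \<omega>"
    unfolding m_def using assms by (auto intro!: AE_I2 Max_ge)
  have least: "\<forall>z\<in>borel_measurable M. (\<forall>f\<in>S. AE \<omega> in M. f \<omega> \<le> z \<omega>) \<longrightarrow> (AE \<omega> in M. m \<omega> \<le> z \<omega>)"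
  proof (intro ballI impI)
    fix z assume "\<forall>f\<in>S. AE \<omega> in M. f \<omega> \<le> z \<omega>"
    then have "AE \<omega> in M. \<forall>f\<in>S. f \<omega> \<le> z \<omega>" using assms(1) by (intro AE_finite_allI) auto
    then show "AE \<omega> in M. m \<omega> \<le> z \<omega>" unfolding m_def by eventually_elim (use assms in auto)
  qed
  define P where "P = (\<lambda>y. y \<in> borel_measurable M \<and> (\<forall>f\<in>S. AE \<omega> in M. f \<omega> \<le> y \<omega>) \<and>
     (\<forall>z\<in>borel_measurable M. (\<forall>f\<in>S. AE \<omega> in M. f \<omega> \<le> z \<omega>) \<longrightarrow> (AE \<omega> in M. y \<omega> \<le> z \<omega>)))"
  have "P m" unfolding P_def using mm ub least by blast
  then have Pe: "P (L0_esssup M S)" unfolding L0_esssup_def P_def[symmetric] by (rule someI[of P m])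
  then show "AE \<omega> in M. L0_esssup M S \<omega> \<le> Max ((\<lambda>f. f \<omega>) ` S)"
    unfolding P_def using mm ub by (auto simp: m_def)
  show "\<And>f. f \<in> S \<Longrightarrow> AE \<omega> in M. f \<omega> \<le> L0_esssup M S \<omega>"
    using Pe unfolding P_def by blast
qed


lemma dual_meas: "\<mu> \<in> L0_dual M sm T \<Longrightarrow> \<mu> x \<in> borel_measurable M"
  unfolding L0_dual_def by auto

lemma dual_add: "\<mu> \<in> L0_dual M sm T \<Longrightarrow> AE \<omega> in M. \<mu> (x + y) \<omega> = \<mu> x \<omega> + \<mu> y \<omega>"
  unfolding L0_dual_def by auto

lemma dual_sm: "\<mu> \<in> L0_dual M sm T \<Longrightarrow> f \<in> borel_measurable M \<Longrightarrow>
    AE \<omega> in M. \<mu> (sm f x) \<omega> = f \<omega> * \<mu> x \<omega>"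
  unfolding L0_dual_def by auto

lemma dual_diff: assumes "\<mu> \<in> L0_dual M sm T"
  shows "AE \<omega> in M. \<mu> (x - y) \<omega> = \<mu> x \<omega> - \<mu> y \<omega>"
  using dual_add[OF assms, of "x - y" y] by eventually_elim simp

lemma dual_zero: assumes "\<mu> \<in> L0_dual M sm T"
  shows "AE \<omega> in M. \<mu> 0 \<omega> = 0"
  using dual_add[OF assms, of 0 0] by eventually_elim simp

definition wsat :: "'w measure \<Rightarrow> (nat \<Rightarrow> ('e \<Rightarrow> 'w \<Rightarrow> real) set) \<Rightarrow> (nat \<Rightarrow> 'w set) \<Rightarrow> ('w \<Rightarrow> real) \<Rightarrow> 'e \<Rightarrow> bool" where
  "wsat M F A e x \<longleftrightarrow> (\<forall>k. \<forall>\<mu>\<in>F k. AE \<omega> in M. \<omega> \<in> A k \<longrightarrow> \<bar>\<mu> x \<omega>\<bar> < e \<omega>)"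

definition wvalid :: "'w measure \<Rightarrow> (('w \<Rightarrow> real) \<Rightarrow> 'e::ab_group_add \<Rightarrow> 'e) \<Rightarrow> 'e topology \<Rightarrow>
    (nat \<Rightarrow> ('e \<Rightarrow> 'w \<Rightarrow> real) set) \<Rightarrow> (nat \<Rightarrow> 'w set) \<Rightarrow> ('w \<Rightarrow> real) \<Rightarrow> bool" where
  "wvalid M sm T F A e \<longleftrightarrow> is_partition M A \<and>
       (\<forall>k. finite (F k) \<and> F k \<noteq> {} \<and> F k \<subseteq> L0_dual M sm T) \<and>
       e \<in> borel_measurable M \<and> (AE \<omega> in M. 0 < e \<omega>)"

lemma weak_nbhd_eq:
  assumes A: "is_partition M A" and F: "\<And>k. finite (F k) \<and> F k \<noteq> {} \<and> F k \<subseteq> L0_dual M sm T"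
  shows "weak_nbhd M F A e = {x. wsat M F A e x}"
proof (intro set_eqI iffI; simp)
  fix x
  define S where "S = (\<lambda>k. (\<lambda>\<mu> \<omega>'. \<bar>\<mu> x \<omega>'\<bar>) ` F k)"
  have S: "finite (S k)" "S k \<noteq> {}" "S k \<subseteq> borel_measurable M" for k
    using F[of k] dual_meas[of _ M sm T] unfolding S_def by auto
  {
    assume "x \<in> weak_nbhd M F A e"
    then have ae: "AE \<omega> in M. L0_concat A (\<lambda>k. L0_esssup M (S k)) \<omega> < e \<omega>"
      unfolding weak_nbhd_def S_def by simp
    show "wsat M F A e x" unfolding wsat_def
    proof (intro allI ballI)
      fix k \<mu> assume "\<mu> \<in> F k"
      then have "(\<lambda>\<omega>'. \<bar>\<mu> x \<omega>'\<bar>) \<in> S k" unfolding S_def by auto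
      from esssup_props(2)[OF S this]
      show "AE \<omega> in M. \<omega> \<in> A k \<longrightarrow> \<bar>\<mu> x \<omega>\<bar> < e \<omega>"
        using ae by eventually_elim (use L0_concat_at[OF A] in force)
    qed
  }
  {
    assume w: "wsat M F A e x"
    have "AE \<omega> in M. \<omega> \<in> A k \<longrightarrow> L0_concat A (\<lambda>k. L0_esssup M (S k)) \<omega> < e \<omega>" for k
    proof -
      have "AE \<omega> in M. \<forall>\<mu>\<in>F k. \<omega> \<in> A k \<longrightarrow> \<bar>\<mu> x \<omega>\<bar> < e \<omega>"
        using w F[of k] unfolding wsat_def by (intro AE_finite_allI) auto
      with esssup_props(1)[OF S, of k]
      show ?thesis
      proof eventually_elim
        case (elim \<omega>)
        show ?case
        proof
          assume "\<omega> \<in> A k"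
          have "Max ((\<lambda>f. f \<omega>) ` S k) < e \<omega>"
            using elim `\<omega> \<in> A k` S[of k] F[of k] unfolding S_def
            by (subst Max_less_iff) auto
          then show "L0_concat A (\<lambda>k. L0_esssup M (S k)) \<omega> < e \<omega>"
            using elim(1) L0_concat_at[OF A `\<omega> \<in> A k`] by simp
        qed
      qed
    qed
    then have "AE \<omega> in M. L0_concat A (\<lambda>k. L0_esssup M (S k)) \<omega> < e \<omega>"
      by (rule AE_partition[OF A])
    then show "x \<in> weak_nbhd M F A e" unfolding weak_nbhd_def S_def by simp
  }
qed


lemma partition_sets: "is_partition M A \<Longrightarrow> A k \<in> sets M"
  unfolding is_partition_def by auto

lemma partition_disj: "is_partition M A \<Longrightarrow> \<omega> \<in> A k \<Longrightarrow> \<omega> \<in> A j \<Longrightarrow> j = k"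
  unfolding is_partition_def disjoint_family_on_def by blast

lemma refine_partition:
  assumes B: "is_partition M B" and A: "\<And>k. is_partition M (A k)"
  shows "is_partition M (\<lambda>n. B (fst (prod_decode n)) \<inter> A (fst (prod_decode n)) (snd (prod_decode n)))"
  unfolding is_partition_def
proof (intro conjI allI)
  fix n show "B (fst (prod_decode n)) \<inter> A (fst (prod_decode n)) (snd (prod_decode n)) \<in> sets M"
    using partition_sets[OF B] partition_sets[OF A] by auto
next
  show "disjoint_family (\<lambda>n. B (fst (prod_decode n)) \<inter> A (fst (prod_decode n)) (snd (prod_decode n)))"
    unfolding disjoint_family_on_def
  proof (intro ballI impI)
    fix m n :: nat assume "m \<noteq> n"
    then have ne: "prod_decode m \<noteq> prod_decode n" using inj_prod_decode by (metis injD)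
    show "B (fst (prod_decode m)) \<inter> A (fst (prod_decode m)) (snd (prod_decode m)) \<inter>
          (B (fst (prod_decode n)) \<inter> A (fst (prod_decode n)) (snd (prod_decode n))) = {}"
    proof (rule ccontr)
      assume "\<not> ?thesis"
      then obtain \<omega> where w: "\<omega> \<in> B (fst (prod_decode m))" "\<omega> \<in> A (fst (prod_decode m)) (snd (prod_decode m))"
        "\<omega> \<in> B (fst (prod_decode n))" "\<omega> \<in> A (fst (prod_decode n)) (snd (prod_decode n))" by blast
      then have "fst (prod_decode m) = fst (prod_decode n)" using partition_disj[OF B] by blast
      moreover then have "snd (prod_decode m) = snd (prod_decode n)" using w partition_disj[OF A] by metis
      ultimately show False using ne by (simp add: prod_eq_iff)
    qed
  qed
next
  show "(\<Union>n. B (fst (prod_decode n)) \<inter> A (fst (prod_decode n)) (snd (prod_decode n))) = space M"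
  proof
    show "(\<Union>n. B (fst (prod_decode n)) \<inter> A (fst (prod_decode n)) (snd (prod_decode n))) \<subseteq> space M"
      using partition_sets[OF B] sets.sets_into_space by blast
    show "space M \<subseteq> (\<Union>n. B (fst (prod_decode n)) \<inter> A (fst (prod_decode n)) (snd (prod_decode n)))"
    proof
      fix \<omega> assume "\<omega> \<in> space M"
      then obtain i j where "\<omega> \<in> B i" "\<omega> \<in> A i j" using partition_ex[OF B] partition_ex[OF A] by metis
      then show "\<omega> \<in> (\<Union>n. B (fst (prod_decode n)) \<inter> A (fst (prod_decode n)) (snd (prod_decode n)))"
        by (intro UN_I[of "prod_encode (i, j)"]) auto
    qed
  qed
qed

lemma wvalid_pos: "wvalid M sm T F A e \<Longrightarrow> AE \<omega> in M. 0 < e \<omega>"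
  unfolding wvalid_def by auto

lemma wvalid_dual: "wvalid M sm T F A e \<Longrightarrow> \<mu> \<in> F k \<Longrightarrow> \<mu> \<in> L0_dual M sm T"
  unfolding wvalid_def by auto

lemma wvalid_part: "wvalid M sm T F A e \<Longrightarrow> is_partition M A"
  unfolding wvalid_def by auto

lemma wsat_zero:
  assumes "wvalid M sm T F A e" shows "wsat M F A e 0"
  unfolding wsat_def
proof (intro allI ballI)
  fix k \<mu> assume "\<mu> \<in> F k"
  then have "\<mu> \<in> L0_dual M sm T" by (rule wvalid_dual[OF assms])
  from dual_zero[OF this] wvalid_pos[OF assms] show "AE \<omega> in M. \<omega> \<in> A k \<longrightarrow> \<bar>\<mu> 0 \<omega>\<bar> < e \<omega>"
    by eventually_elim auto
qed

lemma wvalid_half: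
  assumes "wvalid M sm T F A e" shows "wvalid M sm T F A (\<lambda>\<omega>. e \<omega> / 2)"
  using assms unfolding wvalid_def by (auto elim!: AE_mp intro!: AE_I2)

lemma wsat_add_half:
  assumes "wvalid M sm T F A e" "wsat M F A (\<lambda>\<omega>. e \<omega> / 2) x" "wsat M F A (\<lambda>\<omega>. e \<omega> / 2) y"
  shows "wsat M F A e (x + y)"
  unfolding wsat_def
proof (intro allI ballI)
  fix k \<mu> assume m: "\<mu> \<in> F k"
  then have "\<mu> \<in> L0_dual M sm T" using assms unfolding wvalid_def by auto
  from dual_add[OF this, of x y] assms(2,3)[unfolded wsat_def, rule_format, OF m]
  show "AE \<omega> in M. \<omega> \<in> A k \<longrightarrow> \<bar>\<mu> (x + y) \<omega>\<bar> < e \<omega>"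
    by eventually_elim auto
qed

lemma wsat_intersect:
  assumes v1: "wvalid M sm T F1 A1 e1" and v2: "wvalid M sm T F2 A2 e2"
  shows "\<exists>F A e. wvalid M sm T F A e \<and> (\<forall>x. wsat M F A e x \<longrightarrow> wsat M F1 A1 e1 x \<and> wsat M F2 A2 e2 x)"
proof -
  define C where "C = (\<lambda>n. A1 (fst (prod_decode n)) \<inter> (\<lambda>k. A2) (fst (prod_decode n)) (snd (prod_decode n)))"
  define F where "F = (\<lambda>n. F1 (fst (prod_decode n)) \<union> F2 (snd (prod_decode n)))"
  define e where "e = (\<lambda>\<omega>. min (e1 \<omega>) (e2 \<omega>))"
  have P1: "is_partition M A1" and P2: "is_partition M A2" using v1 v2 unfolding wvalid_def by auto
  have PC: "is_partition M C" unfolding C_def by (rule refine_partition[OF P1 P2])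
  have "wvalid M sm T F C e"
    using v1 v2 PC unfolding wvalid_def F_def e_def by (auto elim: AE_mp intro!: AE_I2)
  moreover have "wsat M F1 A1 e1 x \<and> wsat M F2 A2 e2 x" if w: "wsat M F C e x" for x
  proof
    show "wsat M F1 A1 e1 x" unfolding wsat_def
    proof (intro allI ballI)
      fix k \<mu> assume m: "\<mu> \<in> F1 k"
      show "AE \<omega> in M. \<omega> \<in> A1 k \<longrightarrow> \<bar>\<mu> x \<omega>\<bar> < e1 \<omega>"
      proof (rule AE_partition[OF P2])
        fix j
        have "\<mu> \<in> F (prod_encode (k, j))" using m unfolding F_def by simp
        then have "AE \<omega> in M. \<omega> \<in> C (prod_encode (k, j)) \<longrightarrow> \<bar>\<mu> x \<omega>\<bar> < e \<omega>" using w unfolding wsat_def by blast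
        then show "AE \<omega> in M. \<omega> \<in> A2 j \<longrightarrow> \<omega> \<in> A1 k \<longrightarrow> \<bar>\<mu> x \<omega>\<bar> < e1 \<omega>"
          unfolding C_def e_def by eventually_elim auto
      qed
    qed
    show "wsat M F2 A2 e2 x" unfolding wsat_def
    proof (intro allI ballI)
      fix k \<mu> assume m: "\<mu> \<in> F2 k"
      show "AE \<omega> in M. \<omega> \<in> A2 k \<longrightarrow> \<bar>\<mu> x \<omega>\<bar> < e2 \<omega>"
      proof (rule AE_partition[OF P1])
        fix j
        have "\<mu> \<in> F (prod_encode (j, k))" using m unfolding F_def by simp
        then have "AE \<omega> in M. \<omega> \<in> C (prod_encode (j, k)) \<longrightarrow> \<bar>\<mu> x \<omega>\<bar> < e \<omega>" using w unfolding wsat_def by blast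
        then show "AE \<omega> in M. \<omega> \<in> A1 j \<longrightarrow> \<omega> \<in> A2 k \<longrightarrow> \<bar>\<mu> x \<omega>\<bar> < e2 \<omega>"
          unfolding C_def e_def by eventually_elim auto
      qed
    qed
  qed
  ultimately show ?thesis by blast
qed


definition L0_openP :: "'w measure \<Rightarrow> ('w \<Rightarrow> real) set \<Rightarrow> bool" where
  "L0_openP M U \<longleftrightarrow> U \<subseteq> borel_measurable M \<and>
     (\<forall>f\<in>U. \<exists>e\<in>borel_measurable M. (AE \<omega> in M. 0 < e \<omega>) \<and>
        {g \<in> borel_measurable M. AE \<omega> in M. \<bar>g \<omega> - f \<omega>\<bar> < e \<omega>} \<subseteq> U)"

lemma L0_istop: "istopology (L0_openP M)"
  unfolding istopology_def
proof (rule conjI; intro allI impI)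
  fix S U
  assume S: "L0_openP M S" and U: "L0_openP M U"
  show "L0_openP M (S \<inter> U)" unfolding L0_openP_def
  proof (intro conjI ballI)
    show "S \<inter> U \<subseteq> borel_measurable M" using S unfolding L0_openP_def by auto
    fix f assume "f \<in> S \<inter> U"
    then have fS: "f \<in> S" and fU: "f \<in> U" by auto
    obtain e1 e2 where e1: "e1 \<in> borel_measurable M" "AE \<omega> in M. 0 < e1 \<omega>"
        "{g \<in> borel_measurable M. AE \<omega> in M. \<bar>g \<omega> - f \<omega>\<bar> < e1 \<omega>} \<subseteq> S"
      and e2: "e2 \<in> borel_measurable M" "AE \<omega> in M. 0 < e2 \<omega>"
        "{g \<in> borel_measurable M. AE \<omega> in M. \<bar>g \<omega> - f \<omega>\<bar> < e2 \<omega>} \<subseteq> U"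
      using S fS U fU unfolding L0_openP_def by meson
    have sub: "{g \<in> borel_measurable M. AE \<omega> in M. \<bar>g \<omega> - f \<omega>\<bar> < min (e1 \<omega>) (e2 \<omega>)} \<subseteq> S \<inter> U"
    proof
      fix g assume g: "g \<in> {g \<in> borel_measurable M. AE \<omega> in M. \<bar>g \<omega> - f \<omega>\<bar> < min (e1 \<omega>) (e2 \<omega>)}"
      then have "AE \<omega> in M. \<bar>g \<omega> - f \<omega>\<bar> < e1 \<omega>" "AE \<omega> in M. \<bar>g \<omega> - f \<omega>\<bar> < e2 \<omega>"
        by (auto elim!: AE_mp intro!: AE_I2)
      then show "g \<in> S \<inter> U" using g e1(3) e2(3) by auto
    qed
    show "\<exists>e\<in>borel_measurable M. (AE \<omega> in M. 0 < e \<omega>) \<and>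
        {g \<in> borel_measurable M. AE \<omega> in M. \<bar>g \<omega> - f \<omega>\<bar> < e \<omega>} \<subseteq> S \<inter> U"
      apply (rule bexI[of _ "\<lambda>\<omega>. min (e1 \<omega>) (e2 \<omega>)"])
      using sub e1(1,2) e2(1,2) by (auto elim!: AE_mp intro!: AE_I2)
  qed
next
  fix K
  assume "\<forall>S\<in>K. L0_openP M S"
  then show "L0_openP M (\<Union>K)" unfolding L0_openP_def
    by (smt (verit, best) Union_iff subset_iff)
qed

lemma L0_open: "openin (L0_top M) U \<longleftrightarrow> U \<subseteq> borel_measurable M \<and>
     (\<forall>f\<in>U. \<exists>e\<in>borel_measurable M. (AE \<omega> in M. 0 < e \<omega>) \<and>
        {g \<in> borel_measurable M. AE \<omega> in M. \<bar>g \<omega> - f \<omega>\<bar> < e \<omega>} \<subseteq> U)"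
  unfolding L0_top_def L0_openP_def[symmetric] topology_inverse'[OF L0_istop] by (rule refl)

lemma L0_topspace: "topspace (L0_top M) = borel_measurable M"
proof
  show "topspace (L0_top M) \<subseteq> borel_measurable M"
    unfolding topspace_def L0_open by blast
  have "openin (L0_top M) (borel_measurable M)"
    unfolding L0_open by (auto intro!: bexI[of _ "\<lambda>_. 1"])
  then show "borel_measurable M \<subseteq> topspace (L0_top M)" by (rule openin_subset)
qed

lemma L0_ball_open:
  assumes "f \<in> borel_measurable M" "d \<in> borel_measurable M"
  shows "openin (L0_top M) {g \<in> borel_measurable M. AE \<omega> in M. \<bar>g \<omega> - f \<omega>\<bar> < d \<omega>}"
  unfolding L0_open
proof (intro conjI ballI)
  fix g assume g: "g \<in> {g \<in> borel_measurable M. AE \<omega> in M. \<bar>g \<omega> - f \<omega>\<bar> < d \<omega>}"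
  show "\<exists>e\<in>borel_measurable M. (AE \<omega> in M. 0 < e \<omega>) \<and>
        {h \<in> borel_measurable M. AE \<omega> in M. \<bar>h \<omega> - g \<omega>\<bar> < e \<omega>}
          \<subseteq> {g \<in> borel_measurable M. AE \<omega> in M. \<bar>g \<omega> - f \<omega>\<bar> < d \<omega>}"
  proof (intro bexI[of _ "\<lambda>\<omega>. d \<omega> - \<bar>g \<omega> - f \<omega>\<bar>"] conjI subsetI)
    show "AE \<omega> in M. 0 < d \<omega> - \<bar>g \<omega> - f \<omega>\<bar>" using g by (auto elim!: AE_mp intro!: AE_I2)
    have "g \<in> borel_measurable M" using g by auto
    then show "(\<lambda>\<omega>. d \<omega> - \<bar>g \<omega> - f \<omega>\<bar>) \<in> borel_measurable M" using assms by measurable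
    fix h assume h: "h \<in> {h \<in> borel_measurable M. AE \<omega> in M. \<bar>h \<omega> - g \<omega>\<bar> < d \<omega> - \<bar>g \<omega> - f \<omega>\<bar>}"
    then have "AE \<omega> in M. \<bar>h \<omega> - g \<omega>\<bar> < d \<omega> - \<bar>g \<omega> - f \<omega>\<bar>" by auto
    then have "AE \<omega> in M. \<bar>h \<omega> - f \<omega>\<bar> < d \<omega>" by eventually_elim auto
    then show "h \<in> {g \<in> borel_measurable M. AE \<omega> in M. \<bar>g \<omega> - f \<omega>\<bar> < d \<omega>}" using h by auto
  qed
qed auto

lemma zero_dual: "(\<lambda>x \<omega>. 0) \<in> L0_dual M sm T"
  unfolding L0_dual_def by (auto simp: L0_topspace)


lemma wvalid_ex: "\<exists>F A e. wvalid M sm T F A e"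
proof -
  define A :: "nat \<Rightarrow> _" where "A = (\<lambda>k. if k = 0 then space M else {})"
  have "is_partition M A" unfolding is_partition_def A_def disjoint_family_on_def
    by (auto split: if_splits)
  then have "wvalid M sm T (\<lambda>k. {\<lambda>x \<omega>. 0}) A (\<lambda>_. 1)"
    unfolding wvalid_def using zero_dual by auto
  then show ?thesis by blast
qed

definition wopen :: "'w measure \<Rightarrow> (('w \<Rightarrow> real) \<Rightarrow> 'e::ab_group_add \<Rightarrow> 'e) \<Rightarrow> 'e topology \<Rightarrow> 'e set \<Rightarrow> bool" where
  "wopen M sm T W \<longleftrightarrow> (\<forall>x\<in>W. \<exists>F A e. wvalid M sm T F A e \<and> (\<forall>y. wsat M F A e y \<longrightarrow> x + y \<in> W))"

definition wint :: "'w measure \<Rightarrow> (('w \<Rightarrow> real) \<Rightarrow> 'e::ab_group_add \<Rightarrow> 'e) \<Rightarrow> 'e topology \<Rightarrow> 'e set \<Rightarrow> 'e set" where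
  "wint M sm T S = {z. \<exists>F A e. wvalid M sm T F A e \<and> (\<forall>y. wsat M F A e y \<longrightarrow> z + y \<in> S)}"

lemma wopen_istop: "istopology (wopen M sm T)"
  unfolding istopology_def
proof (rule conjI; intro allI impI)
  fix S U assume S: "wopen M sm T S" and U: "wopen M sm T U"
  show "wopen M sm T (S \<inter> U)" unfolding wopen_def
  proof
    fix x assume "x \<in> S \<inter> U"
    then obtain F1 A1 e1 F2 A2 e2 where 1: "wvalid M sm T F1 A1 e1" "\<forall>y. wsat M F1 A1 e1 y \<longrightarrow> x + y \<in> S"
      and 2: "wvalid M sm T F2 A2 e2" "\<forall>y. wsat M F2 A2 e2 y \<longrightarrow> x + y \<in> U"
      using S U unfolding wopen_def by blast
    from wsat_intersect[OF 1(1) 2(1)] obtain F A e where "wvalid M sm T F A e"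
      "\<forall>x. wsat M F A e x \<longrightarrow> wsat M F1 A1 e1 x \<and> wsat M F2 A2 e2 x" by blast
    then show "\<exists>F A e. wvalid M sm T F A e \<and> (\<forall>y. wsat M F A e y \<longrightarrow> x + y \<in> S \<inter> U)"
      using 1 2 by blast
  qed
next
  fix K assume "\<forall>S\<in>K. wopen M sm T S"
  then show "wopen M sm T (\<Union>K)" unfolding wopen_def by (meson UnionI Union_iff)
qed

definition wtop :: "'w measure \<Rightarrow> (('w \<Rightarrow> real) \<Rightarrow> 'e::ab_group_add \<Rightarrow> 'e) \<Rightarrow> 'e topology \<Rightarrow> 'e topology" where
  "wtop M sm T = topology (wopen M sm T)"

lemma wtop_open: "openin (wtop M sm T) W \<longleftrightarrow> wopen M sm T W"
  unfolding wtop_def topology_inverse'[OF wopen_istop] by (rule refl)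

lemma wtop_space: "topspace (wtop M sm T) = UNIV"
proof -
  have "wopen M sm T UNIV" unfolding wopen_def using wvalid_ex by blast
  then show ?thesis using openin_subset[of "wtop M sm T" UNIV] wtop_open by blast
qed

lemma wint_sub: "wint M sm T S \<subseteq> S"
  unfolding wint_def using wsat_zero by fastforce

lemma wint_open: "openin (wtop M sm T) (wint M sm T S)"
  unfolding wtop_open wopen_def
proof
  fix z assume "z \<in> wint M sm T S"
  then obtain F A e where v: "wvalid M sm T F A e" and h: "\<forall>y. wsat M F A e y \<longrightarrow> z + y \<in> S"
    unfolding wint_def by blast
  have v2: "wvalid M sm T F A (\<lambda>\<omega>. e \<omega> / 2)" by (rule wvalid_half[OF v])
  have "z + y \<in> wint M sm T S" if "wsat M F A (\<lambda>\<omega>. e \<omega> / 2) y" for y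
    unfolding wint_def
  proof (intro CollectI exI conjI allI impI)
    show "wvalid M sm T F A (\<lambda>\<omega>. e \<omega> / 2)" by (rule v2)
    fix y' assume "wsat M F A (\<lambda>\<omega>. e \<omega> / 2) y'"
    then have "wsat M F A e (y + y')" using wsat_add_half[OF v that] by blast
    then show "z + y + y' \<in> S" using h by (simp add: add.assoc)
  qed
  then show "\<exists>F A e. wvalid M sm T F A e \<and> (\<forall>y. wsat M F A e y \<longrightarrow> z + y \<in> wint M sm T S)"
    using v2 by blast
qed

lemma nbhd_open:
  assumes "wvalid M sm T F A e"
  shows "\<exists>W. openin (wtop M sm T) W \<and> x \<in> W \<and> (\<forall>w\<in>W. wsat M F A e (w - x))"
proof (intro exI conjI)
  let ?S = "{x + y | y. wsat M F A e y}"
  show "openin (wtop M sm T) (wint M sm T ?S)" by (rule wint_open)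
  show "x \<in> wint M sm T ?S" unfolding wint_def using assms by blast
  show "\<forall>w\<in>wint M sm T ?S. wsat M F A e (w - x)"
    using wint_sub[of M sm T ?S] by auto
qed


definition Ucol :: "'w measure \<Rightarrow> (('w \<Rightarrow> real) \<Rightarrow> 'e::ab_group_add \<Rightarrow> 'e) \<Rightarrow> 'e topology \<Rightarrow> 'e set set" where
  "Ucol M sm T = {weak_nbhd M F A e | F A e.
       is_partition M A \<and>
       (\<forall>k. finite (F k) \<and> F k \<noteq> {} \<and> F k \<subseteq> L0_dual M sm T) \<and>
       e \<in> borel_measurable M \<and> (AE \<omega> in M. 0 < e \<omega>)}"

lemma Ucol_iff: "V \<in> Ucol M sm T \<longleftrightarrow> (\<exists>F A e. wvalid M sm T F A e \<and> V = {x. wsat M F A e x})"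
proof
  assume "V \<in> Ucol M sm T"
  then obtain F A e where 1: "is_partition M A" "\<forall>k. finite (F k) \<and> F k \<noteq> {} \<and> F k \<subseteq> L0_dual M sm T"
     "e \<in> borel_measurable M" "AE \<omega> in M. 0 < e \<omega>" and V: "V = weak_nbhd M F A e"
    unfolding Ucol_def by blast
  have v: "wvalid M sm T F A e" unfolding wvalid_def using 1 by blast
  have "V = {x. wsat M F A e x}" unfolding V by (rule weak_nbhd_eq[OF 1(1)]) (use 1(2) in blast)
  with v show "\<exists>F A e. wvalid M sm T F A e \<and> V = {x. wsat M F A e x}" by blast
next
  assume "\<exists>F A e. wvalid M sm T F A e \<and> V = {x. wsat M F A e x}"
  then obtain F A e where v: "wvalid M sm T F A e" and V: "V = {x. wsat M F A e x}" by blast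
  have 1: "is_partition M A" "\<forall>k. finite (F k) \<and> F k \<noteq> {} \<and> F k \<subseteq> L0_dual M sm T"
     "e \<in> borel_measurable M" "AE \<omega> in M. 0 < e \<omega>" using v unfolding wvalid_def by blast+
  have "V = weak_nbhd M F A e" unfolding V by (rule weak_nbhd_eq[OF 1(1), symmetric]) (use 1(2) in blast)
  then show "V \<in> Ucol M sm T" unfolding Ucol_def using 1 by blast
qed

lemma wtop_nhds: "nhds_base (wtop M sm T) 0 (Ucol M sm T)"
  unfolding nhds_base_def
proof (intro conjI ballI allI impI)
  fix V assume "V \<in> Ucol M sm T"
  then obtain F A e where v: "wvalid M sm T F A e" and V: "V = {x. wsat M F A e x}"
    unfolding Ucol_iff by blast
  from nbhd_open[OF v, of 0] obtain W where W: "openin (wtop M sm T) W" "0 \<in> W"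
    "\<forall>w\<in>W. wsat M F A e (w - 0)" by blast
  have "W \<subseteq> V" unfolding V using W(3) by auto
  then show "\<exists>W. openin (wtop M sm T) W \<and> 0 \<in> W \<and> W \<subseteq> V" using W by blast
next
  fix W assume "openin (wtop M sm T) W \<and> 0 \<in> W"
  then obtain F A e where v: "wvalid M sm T F A e" and h: "\<forall>y. wsat M F A e y \<longrightarrow> 0 + y \<in> W"
    unfolding wtop_open wopen_def by blast
  then have "{x. wsat M F A e x} \<in> Ucol M sm T" unfolding Ucol_iff by blast
  moreover have "{x. wsat M F A e x} \<subseteq> W" using h by auto
  ultimately show "\<exists>V\<in>Ucol M sm T. V \<subseteq> W" by blast
qed


lemma wtop_add_cont:
  "continuous_map (prod_topology (wtop M sm T) (wtop M sm T)) (wtop M sm T) (\<lambda>(x, y). x + y)"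
  unfolding continuous_map_def topspace_prod_topology wtop_space
proof (intro conjI allI impI)
  show "(\<lambda>(x, y). x + y) \<in> UNIV \<times> UNIV \<rightarrow> UNIV" by auto
  fix W assume "openin (wtop M sm T) W"
  then have Wo: "wopen M sm T W" by (simp add: wtop_open)
  show "openin (prod_topology (wtop M sm T) (wtop M sm T)) {p \<in> UNIV \<times> UNIV. (\<lambda>(x, y). x + y) p \<in> W}"
    unfolding openin_prod_topology_alt
  proof (intro allI impI)
    fix x y assume "(x, y) \<in> {p \<in> UNIV \<times> UNIV. (\<lambda>(x, y). x + y) p \<in> W}"
    then have "x + y \<in> W" by auto
    then obtain F A e where v: "wvalid M sm T F A e" and h: "\<forall>z. wsat M F A e z \<longrightarrow> x + y + z \<in> W"
      using Wo unfolding wopen_def by blast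
    obtain U1 where U1: "openin (wtop M sm T) U1" "x \<in> U1" "\<forall>w\<in>U1. wsat M F A (\<lambda>\<omega>. e \<omega> / 2) (w - x)"
      using nbhd_open[OF wvalid_half[OF v], of x] by blast
    obtain U2 where U2: "openin (wtop M sm T) U2" "y \<in> U2" "\<forall>w\<in>U2. wsat M F A (\<lambda>\<omega>. e \<omega> / 2) (w - y)"
      using nbhd_open[OF wvalid_half[OF v], of y] by blast
    have "U1 \<times> U2 \<subseteq> {p \<in> UNIV \<times> UNIV. (\<lambda>(x, y). x + y) p \<in> W}"
    proof clarsimp
      fix a b assume "a \<in> U1" "b \<in> U2"
      then have "wsat M F A e ((a - x) + (b - y))" using U1(3) U2(3) wsat_add_half[OF v] by blast
      then have "x + y + ((a - x) + (b - y)) \<in> W" using h by blast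
      moreover have "x + y + ((a - x) + (b - y)) = a + b" by (simp add: algebra_simps)
      ultimately show "a + b \<in> W" by simp
    qed
    then show "\<exists>U V. openin (wtop M sm T) U \<and> openin (wtop M sm T) V \<and> x \<in> U \<and> y \<in> V \<and>
        U \<times> V \<subseteq> {p \<in> UNIV \<times> UNIV. (\<lambda>(x, y). x + y) p \<in> W}"
      using U1 U2 by blast
  qed
qed


lemma real_ineq_sm:
  fixes g f mx ma B e :: real
  assumes gf: "\<bar>g - f\<bar> < min 1 (e / (2 * (B + 1)))" and mx: "\<bar>mx\<bar> \<le> B"
    and ma: "\<bar>ma\<bar> < e / (2 * (\<bar>f\<bar> + 1))" and e: "0 < e"
  shows "\<bar>g * (mx + ma) - f * mx\<bar> < e"
proof -
  have B: "0 \<le> B" using mx by linarith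
  have eq: "g * (mx + ma) - f * mx = (g - f) * mx + g * ma" by (simp add: algebra_simps)
  have "\<bar>(g - f) * mx\<bar> \<le> (e / (2 * (B + 1))) * B"
    unfolding abs_mult using gf mx by (intro mult_mono) auto
  also have "\<dots> < e / 2"
  proof -
    have "(e / (2 * (B + 1))) * B = (e / 2) * (B / (B + 1))" by (simp add: field_simps)
    also have "\<dots> < (e / 2) * 1" using B e by (intro mult_strict_left_mono) auto
    finally show ?thesis by simp
  qed
  finally have 1: "\<bar>(g - f) * mx\<bar> < e / 2" .
  have g: "\<bar>g\<bar> \<le> \<bar>f\<bar> + 1" using gf by linarith
  have "\<bar>g * ma\<bar> \<le> (\<bar>f\<bar> + 1) * (e / (2 * (\<bar>f\<bar> + 1)))"
    unfolding abs_mult using g ma by (intro mult_mono) auto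
  also have "\<dots> = e / 2" by (simp add: field_simps)
  finally have 2: "\<bar>g * ma\<bar> \<le> e / 2" .
  show ?thesis unfolding eq using 1 2 by linarith
qed


definition pmax :: "(nat \<Rightarrow> ('e \<Rightarrow> 'w \<Rightarrow> real) set) \<Rightarrow> (nat \<Rightarrow> 'w set) \<Rightarrow> 'e \<Rightarrow> 'w \<Rightarrow> real" where
  "pmax F A x = L0_concat A (\<lambda>k \<omega>. Max ((\<lambda>\<mu>. \<bar>\<mu> x \<omega>\<bar>) ` F k))"

lemma pmax_meas: "wvalid M sm T F A e \<Longrightarrow> pmax F A x \<in> borel_measurable M"
  unfolding pmax_def
proof (rule L0_concat_meas)
  fix k assume v: "wvalid M sm T F A e"
  then have "finite (F k)" unfolding wvalid_def by auto
  then show "(\<lambda>\<omega>. Max ((\<lambda>\<mu>. \<bar>\<mu> x \<omega>\<bar>) ` F k)) \<in> borel_measurable M"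
    using dual_meas[OF wvalid_dual[OF v]] by (intro borel_measurable_Max) auto
qed (simp add: wvalid_def)

lemma pmax_ge: "wvalid M sm T F A e \<Longrightarrow> \<omega> \<in> A k \<Longrightarrow> \<mu> \<in> F k \<Longrightarrow> \<bar>\<mu> x \<omega>\<bar> \<le> pmax F A x \<omega>"
  unfolding pmax_def
  by (subst L0_concat_at[of M]) (auto simp: wvalid_def intro!: Max_ge)

lemma pmax_nonneg: assumes v: "wvalid M sm T F A e" and w: "\<omega> \<in> space M" shows "0 \<le> pmax F A x \<omega>"
proof -
  obtain k where k: "\<omega> \<in> A k" using partition_ex[OF wvalid_part[OF v] w] by blast
  obtain \<mu> where "\<mu> \<in> F k" using v unfolding wvalid_def by blast
  from pmax_ge[OF v k this, of x] show ?thesis by linarith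
qed

lemma wtop_sm_cont:
  "continuous_map (prod_topology (L0_top M) (wtop M sm T)) (wtop M sm T) (\<lambda>(f, x). sm f x)"
  unfolding continuous_map_def topspace_prod_topology wtop_space L0_topspace
proof (intro conjI allI impI)
  show "(\<lambda>(f, x). sm f x) \<in> borel_measurable M \<times> UNIV \<rightarrow> UNIV" by auto
  fix W assume "openin (wtop M sm T) W"
  then have Wo: "wopen M sm T W" by (simp add: wtop_open)
  show "openin (prod_topology (L0_top M) (wtop M sm T)) {p \<in> borel_measurable M \<times> UNIV. (\<lambda>(f, x). sm f x) p \<in> W}"
    unfolding openin_prod_topology_alt
  proof (intro allI impI)
    fix f x assume "(f, x) \<in> {p \<in> borel_measurable M \<times> UNIV. (\<lambda>(f, x). sm f x) p \<in> W}"
    then have fm: "f \<in> borel_measurable M" and fx: "sm f x \<in> W" by auto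
    then obtain F A e where v: "wvalid M sm T F A e" and h: "\<forall>z. wsat M F A e z \<longrightarrow> sm f x + z \<in> W"
      using Wo unfolding wopen_def by blast
    have em: "e \<in> borel_measurable M" and epos: "AE \<omega> in M. 0 < e \<omega>" and P: "is_partition M A"
      using v unfolding wvalid_def by auto
    define B where "B = pmax F A x"
    have Bm: "B \<in> borel_measurable M" unfolding B_def by (rule pmax_meas[OF v])
    define d where "d = (\<lambda>\<omega>. min 1 (e \<omega> / (2 * (B \<omega> + 1))))"
    define e' where "e' = (\<lambda>\<omega>. e \<omega> / (2 * (\<bar>f \<omega>\<bar> + 1)))"
    have dm: "d \<in> borel_measurable M" unfolding d_def using Bm em by measurable
    have dpos: "AE \<omega> in M. 0 < d \<omega>"
      using epos AE_space by eventually_elim (use pmax_nonneg[OF v] in \<open>auto simp: d_def B_def intro!: divide_pos_pos add_nonneg_pos\<close>)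
    have v': "wvalid M sm T F A e'"
    proof -
      have "e' \<in> borel_measurable M" unfolding e'_def using em fm by measurable
      moreover have "AE \<omega> in M. 0 < e' \<omega>" using epos by eventually_elim (auto simp: e'_def)
      ultimately show ?thesis using v unfolding wvalid_def by blast
    qed
    obtain U2 where U2: "openin (wtop M sm T) U2" "x \<in> U2" "\<forall>w\<in>U2. wsat M F A e' (w - x)"
      using nbhd_open[OF v', of x] by blast
    define U1 where "U1 = {g \<in> borel_measurable M. AE \<omega> in M. \<bar>g \<omega> - f \<omega>\<bar> < d \<omega>}"
    have U1: "openin (L0_top M) U1" unfolding U1_def by (rule L0_ball_open[OF fm dm])
    have fU1: "f \<in> U1" unfolding U1_def using fm dpos by auto
    have "U1 \<times> U2 \<subseteq> {p \<in> borel_measurable M \<times> UNIV. (\<lambda>(f, x). sm f x) p \<in> W}"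
    proof clarsimp
      fix g y assume g: "g \<in> U1" and y: "y \<in> U2"
      have gm: "g \<in> borel_measurable M" and gd: "AE \<omega> in M. \<bar>g \<omega> - f \<omega>\<bar> < d \<omega>" using g unfolding U1_def by auto
      have ya: "wsat M F A e' (y - x)" using y U2(3) by blast
      have "wsat M F A e (sm g y - sm f x)" unfolding wsat_def
      proof (intro allI ballI)
        fix k \<mu> assume m: "\<mu> \<in> F k"
        have mu: "\<mu> \<in> L0_dual M sm T" by (rule wvalid_dual[OF v m])
        have a1: "AE \<omega> in M. \<mu> (sm g y - sm f x) \<omega> = \<mu> (sm g y) \<omega> - \<mu> (sm f x) \<omega>" by (rule dual_diff[OF mu])
        have a2: "AE \<omega> in M. \<mu> (sm g y) \<omega> = g \<omega> * \<mu> y \<omega>" by (rule dual_sm[OF mu gm])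
        have a3: "AE \<omega> in M. \<mu> (sm f x) \<omega> = f \<omega> * \<mu> x \<omega>" by (rule dual_sm[OF mu fm])
        have a4: "AE \<omega> in M. \<mu> y \<omega> = \<mu> x \<omega> + \<mu> (y - x) \<omega>" using dual_add[OF mu, of x "y - x"] by simp
        have a5: "AE \<omega> in M. \<omega> \<in> A k \<longrightarrow> \<bar>\<mu> (y - x) \<omega>\<bar> < e' \<omega>" using ya m unfolding wsat_def by blast
        show "AE \<omega> in M. \<omega> \<in> A k \<longrightarrow> \<bar>\<mu> (sm g y - sm f x) \<omega>\<bar> < e \<omega>"
          using a1 a2 a3 a4 a5 gd epos
        proof eventually_elim
          case (elim \<omega>)
          show ?case
          proof
            assume k: "\<omega> \<in> A k"
            have "\<bar>\<mu> x \<omega>\<bar> \<le> B \<omega>" unfolding B_def by (rule pmax_ge[OF v k m])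
            from real_ineq_sm[of "g \<omega>" "f \<omega>" "e \<omega>" "B \<omega>" "\<mu> x \<omega>" "\<mu> (y - x) \<omega>", OF _ this]
            have "\<bar>g \<omega> * (\<mu> x \<omega> + \<mu> (y - x) \<omega>) - f \<omega> * \<mu> x \<omega>\<bar> < e \<omega>"
              using elim k unfolding d_def e'_def by auto
            then show "\<bar>\<mu> (sm g y - sm f x) \<omega>\<bar> < e \<omega>" using elim by simp
          qed
        qed
      qed
      then have "sm f x + (sm g y - sm f x) \<in> W" using h by blast
      then show "g \<in> borel_measurable M \<and> sm g y \<in> W" using gm by simp
    qed
    then show "\<exists>U V. openin (L0_top M) U \<and> openin (wtop M sm T) V \<and> f \<in> U \<and> x \<in> V \<and>
        U \<times> V \<subseteq> {p \<in> borel_measurable M \<times> UNIV. (\<lambda>(f, x). sm f x) p \<in> W}"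
      using U1 fU1 U2 by blast
  qed
qed


lemma E_concat_prop:
  assumes "countable_concatenation M sm" "is_partition M B"
  shows "sm (indicator (B k)) (E_concat sm B x) = sm (indicator (B k)) (x k)"
proof -
  have "\<exists>!z. \<forall>k. sm (indicator (B k)) z = sm (indicator (B k)) (x k)"
    using assms unfolding countable_concatenation_def by blast
  from theI'[OF this] show ?thesis unfolding E_concat_def by blast
qed

lemma E_concat_eq:
  assumes "countable_concatenation M sm" "is_partition M B"
    and "\<And>k. sm (indicator (B k)) z = sm (indicator (B k)) (x k)"
  shows "E_concat sm B x = z"
proof -
  have "\<exists>!z. \<forall>k. sm (indicator (B k)) z = sm (indicator (B k)) (x k)"
    using assms unfolding countable_concatenation_def by blast
  then show ?thesis unfolding E_concat_def using assms(3) by (intro the1_equality) auto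
qed

lemma dual_concat:
  assumes mu: "\<mu> \<in> L0_dual M sm T" and cc: "countable_concatenation M sm" and B: "is_partition M B"
  shows "AE \<omega> in M. \<omega> \<in> B k \<longrightarrow> \<mu> (E_concat sm B x) \<omega> = \<mu> (x k) \<omega>"
proof -
  have im: "indicator (B k) \<in> borel_measurable M" using partition_sets[OF B] by simp
  have "AE \<omega> in M. \<mu> (sm (indicator (B k)) (E_concat sm B x)) \<omega> = indicator (B k) \<omega> * \<mu> (E_concat sm B x) \<omega>"
    by (rule dual_sm[OF mu im])
  moreover have "AE \<omega> in M. \<mu> (sm (indicator (B k)) (x k)) \<omega> = indicator (B k) \<omega> * \<mu> (x k) \<omega>"
    by (rule dual_sm[OF mu im])
  ultimately show ?thesis unfolding E_concat_prop[OF cc B] by eventually_elim auto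
qed

lemma Ucol_stable_set:
  assumes cc: "countable_concatenation M sm" and V: "V \<in> Ucol M sm T"
  shows "stable_set M sm V"
  unfolding stable_set_def
proof (intro allI impI)
  fix B and x :: "nat \<Rightarrow> _" assume B: "is_partition M B" and x: "\<forall>k. x k \<in> V"
  obtain F A e where v: "wvalid M sm T F A e" and V: "V = {x. wsat M F A e x}"
    using V unfolding Ucol_iff by blast
  show "E_concat sm B x \<in> V" unfolding V wsat_def
  proof (intro CollectI allI ballI)
    fix j \<mu> assume m: "\<mu> \<in> F j"
    have mu: "\<mu> \<in> L0_dual M sm T" by (rule wvalid_dual[OF v m])
    show "AE \<omega> in M. \<omega> \<in> A j \<longrightarrow> \<bar>\<mu> (E_concat sm B x) \<omega>\<bar> < e \<omega>"
    proof (rule AE_partition[OF B])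
      fix k
      have "AE \<omega> in M. \<omega> \<in> A j \<longrightarrow> \<bar>\<mu> (x k) \<omega>\<bar> < e \<omega>" using x m unfolding V wsat_def by blast
      with dual_concat[OF mu cc B, of k x]
      show "AE \<omega> in M. \<omega> \<in> B k \<longrightarrow> \<omega> \<in> A j \<longrightarrow> \<bar>\<mu> (E_concat sm B x) \<omega>\<bar> < e \<omega>"
        by eventually_elim auto
    qed
  qed
qed


lemma sm_mult: "L0_module M sm \<Longrightarrow> f \<in> borel_measurable M \<Longrightarrow> g \<in> borel_measurable M \<Longrightarrow>
    sm (\<lambda>\<omega>. f \<omega> * g \<omega>) x = sm f (sm g x)"
  unfolding L0_module_def by blast

lemma sm_ae: "L0_module M sm \<Longrightarrow> f \<in> borel_measurable M \<Longrightarrow> g \<in> borel_measurable M \<Longrightarrow>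
    (AE \<omega> in M. f \<omega> = g \<omega>) \<Longrightarrow> sm f x = sm g x"
  unfolding L0_module_def by blast

lemma sm_one: "L0_module M sm \<Longrightarrow> sm (\<lambda>\<omega>. 1) x = x"
  unfolding L0_module_def by blast

lemma sm_indicator_idem:
  assumes Lm: "L0_module M sm" and B: "Bk \<in> sets M"
  shows "sm (indicator Bk) (sm (indicator Bk) x) = sm (indicator Bk) x"
proof -
  have im: "indicator Bk \<in> borel_measurable M" using B by simp
  have "sm (indicator Bk) (sm (indicator Bk) x) = sm (\<lambda>\<omega>. indicator Bk \<omega> * indicator Bk \<omega>) x"
    by (rule sm_mult[OF Lm im im, symmetric])
  also have "(\<lambda>\<omega>. indicator Bk \<omega> * indicator Bk \<omega> :: real) = indicator Bk"
    by (auto simp: indicator_def fun_eq_iff)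
  finally show ?thesis .
qed

lemma Ucol_set_concat:
  assumes Lm: "L0_module M sm" and cc: "countable_concatenation M sm"
    and B: "is_partition M B" and S: "\<forall>k. S k \<in> Ucol M sm T"
  shows "set_concat sm B S \<in> Ucol M sm T"
proof -
  have "\<forall>k. \<exists>F A e. wvalid M sm T F A e \<and> S k = {x. wsat M F A e x}"
    using S unfolding Ucol_iff by blast
  then obtain FF AA ee where v: "\<And>k. wvalid M sm T (FF k) (AA k) (ee k)"
    and Sk: "\<And>k. S k = {x. wsat M (FF k) (AA k) (ee k) x}" by metis
  define C where "C = (\<lambda>n. B (fst (prod_decode n)) \<inter> AA (fst (prod_decode n)) (snd (prod_decode n)))"
  define F where "F = (\<lambda>n. FF (fst (prod_decode n)) (snd (prod_decode n)))"
  define e where "e = L0_concat B ee"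
  have PC: "is_partition M C" unfolding C_def by (rule refine_partition[OF B wvalid_part[OF v]])
  have e_at: "\<And>k \<omega>. \<omega> \<in> B k \<Longrightarrow> e \<omega> = ee k \<omega>" unfolding e_def by (rule L0_concat_at[OF B])
  have Fn: "\<forall>n. finite (F n) \<and> F n \<noteq> {} \<and> F n \<subseteq> L0_dual M sm T"
    using v unfolding F_def wvalid_def by blast
  have em: "e \<in> borel_measurable M" unfolding e_def
    by (rule L0_concat_meas[OF B]) (use v in \<open>auto simp: wvalid_def\<close>)
  have epos: "AE \<omega> in M. 0 < e \<omega>"
  proof (rule AE_partition[OF B])
    fix k show "AE \<omega> in M. \<omega> \<in> B k \<longrightarrow> 0 < e \<omega>"
      using wvalid_pos[OF v[of k]] by eventually_elim (auto simp: e_at)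
  qed
  have ve: "wvalid M sm T F C e" unfolding wvalid_def using PC Fn em epos by blast
  have "set_concat sm B S = {x. wsat M F C e x}"
  proof (intro set_eqI iffI)
    fix x assume "x \<in> set_concat sm B S"
    then obtain xs where x: "x = E_concat sm B xs" and xs: "\<forall>k. xs k \<in> S k"
      unfolding set_concat_def by blast
    show "x \<in> {x. wsat M F C e x}" unfolding wsat_def
    proof (intro CollectI allI ballI)
      fix n \<mu> assume m: "\<mu> \<in> F n"
      obtain k j where kj: "prod_decode n = (k, j)" by (cases "prod_decode n")
      have m': "\<mu> \<in> FF k j" using m kj unfolding F_def by simp
      have mu: "\<mu> \<in> L0_dual M sm T" by (rule wvalid_dual[OF v m'])
      have "AE \<omega> in M. \<omega> \<in> AA k j \<longrightarrow> \<bar>\<mu> (xs k) \<omega>\<bar> < ee k \<omega>"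
        using xs m' unfolding Sk wsat_def by blast
      with dual_concat[OF mu cc B, of k xs]
      show "AE \<omega> in M. \<omega> \<in> C n \<longrightarrow> \<bar>\<mu> x \<omega>\<bar> < e \<omega>"
        unfolding x C_def kj by eventually_elim (auto simp: e_at)
    qed
  next
    fix x assume x: "x \<in> {x. wsat M F C e x}"
    define xs where "xs = (\<lambda>k. sm (indicator (B k)) x)"
    have "xs k \<in> S k" for k unfolding Sk wsat_def
    proof (intro CollectI allI ballI)
      fix j \<mu> assume m: "\<mu> \<in> FF k j"
      have mu: "\<mu> \<in> L0_dual M sm T" by (rule wvalid_dual[OF v m])
      have im: "indicator (B k) \<in> borel_measurable M" using partition_sets[OF B] by simp
      have "\<mu> \<in> F (prod_encode (k, j))" using m unfolding F_def by simp
      then have "AE \<omega> in M. \<omega> \<in> C (prod_encode (k, j)) \<longrightarrow> \<bar>\<mu> x \<omega>\<bar> < e \<omega>"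
        using x unfolding wsat_def by blast
      with dual_sm[OF mu im, of x] wvalid_pos[OF v[of k]]
      show "AE \<omega> in M. \<omega> \<in> AA k j \<longrightarrow> \<bar>\<mu> (xs k) \<omega>\<bar> < ee k \<omega>"
        unfolding xs_def C_def by eventually_elim (auto simp: e_at indicator_def)
    qed
    moreover have "E_concat sm B xs = x"
      by (rule E_concat_eq[OF cc B]) (simp add: xs_def sm_indicator_idem[OF Lm partition_sets[OF B]])
    ultimately show "x \<in> set_concat sm B S" unfolding set_concat_def by blast
  qed
  then show ?thesis unfolding Ucol_iff using ve by blast
qed


lemma Ucol_balanced:
  assumes V: "V \<in> Ucol M sm T" shows "L0_balanced M sm V"
  unfolding L0_balanced_def
proof (intro ballI impI)
  obtain F A e where v: "wvalid M sm T F A e" and V: "V = {x. wsat M F A e x}"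
    using V unfolding Ucol_iff by blast
  fix x and l :: "_ \<Rightarrow> real" assume x: "x \<in> V" and lm: "l \<in> borel_measurable M" and l: "AE \<omega> in M. \<bar>l \<omega>\<bar> \<le> 1"
  show "sm l x \<in> V" unfolding V wsat_def
  proof (intro CollectI allI ballI)
    fix k \<mu> assume m: "\<mu> \<in> F k"
    have mu: "\<mu> \<in> L0_dual M sm T" by (rule wvalid_dual[OF v m])
    have "AE \<omega> in M. \<omega> \<in> A k \<longrightarrow> \<bar>\<mu> x \<omega>\<bar> < e \<omega>" using x m unfolding V wsat_def by blast
    with dual_sm[OF mu lm, of x] l
    show "AE \<omega> in M. \<omega> \<in> A k \<longrightarrow> \<bar>\<mu> (sm l x) \<omega>\<bar> < e \<omega>"
    proof eventually_elim
      case (elim \<omega>)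
      have "\<bar>l \<omega> * \<mu> x \<omega>\<bar> \<le> \<bar>\<mu> x \<omega>\<bar>" unfolding abs_mult using elim(2)
        by (simp add: mult_left_le_one_le)
      then show ?case using elim by auto
    qed
  qed
qed

lemma real_ineq_convex:
  fixes l a b e :: real
  assumes "0 \<le> l" "l \<le> 1" "\<bar>a\<bar> < e" "\<bar>b\<bar> < e"
  shows "\<bar>l * a + (1 - l) * b\<bar> < e"
proof -
  have "\<bar>l * a + (1 - l) * b\<bar> \<le> \<bar>l * a\<bar> + \<bar>(1 - l) * b\<bar>" by (rule abs_triangle_ineq)
  also have "\<dots> = l * \<bar>a\<bar> + (1 - l) * \<bar>b\<bar>" using assms by (simp add: abs_mult)
  also have "\<dots> < l * e + (1 - l) * e"
  proof (cases "l = 0")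
    case True then show ?thesis using assms by simp
  next
    case False
    then have "l * \<bar>a\<bar> < l * e" using assms by simp
    moreover have "(1 - l) * \<bar>b\<bar> \<le> (1 - l) * e" using assms by (intro mult_left_mono) auto
    ultimately show ?thesis by linarith
  qed
  also have "\<dots> = e" by (simp add: algebra_simps)
  finally show ?thesis .
qed

lemma Ucol_convex:
  assumes V: "V \<in> Ucol M sm T" shows "L0_convex M sm V"
  unfolding L0_convex_def
proof (intro ballI impI)
  obtain F A e where v: "wvalid M sm T F A e" and V: "V = {x. wsat M F A e x}"
    using V unfolding Ucol_iff by blast
  fix x y and l :: "_ \<Rightarrow> real" assume x: "x \<in> V" and y: "y \<in> V" and lm: "l \<in> borel_measurable M"
    and l: "AE \<omega> in M. 0 \<le> l \<omega> \<and> l \<omega> \<le> 1"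
  have lm': "(\<lambda>\<omega>. 1 - l \<omega>) \<in> borel_measurable M" using lm by measurable
  show "sm l x + sm (\<lambda>\<omega>. 1 - l \<omega>) y \<in> V" unfolding V wsat_def
  proof (intro CollectI allI ballI)
    fix k \<mu> assume m: "\<mu> \<in> F k"
    have mu: "\<mu> \<in> L0_dual M sm T" by (rule wvalid_dual[OF v m])
    have ax: "AE \<omega> in M. \<omega> \<in> A k \<longrightarrow> \<bar>\<mu> x \<omega>\<bar> < e \<omega>" using x m unfolding V wsat_def by blast
    have ay: "AE \<omega> in M. \<omega> \<in> A k \<longrightarrow> \<bar>\<mu> y \<omega>\<bar> < e \<omega>" using y m unfolding V wsat_def by blast
    from ax ay l dual_sm[OF mu lm, of x] dual_sm[OF mu lm', of y]
      dual_add[OF mu, of "sm l x" "sm (\<lambda>\<omega>. 1 - l \<omega>) y"]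
    show "AE \<omega> in M. \<omega> \<in> A k \<longrightarrow> \<bar>\<mu> (sm l x + sm (\<lambda>\<omega>. 1 - l \<omega>) y) \<omega>\<bar> < e \<omega>"
    proof eventually_elim
      case (elim \<omega>)
      then show ?case using real_ineq_convex[of "l \<omega>" "\<mu> x \<omega>" "e \<omega>" "\<mu> y \<omega>"] by auto
    qed
  qed
qed

lemma real_ineq_absorb:
  fixes m B e :: real
  assumes "\<bar>m\<bar> \<le> B" "0 < e"
  shows "\<bar>1 / (1 + B / e) * m\<bar> < e"
proof -
  have B: "0 \<le> B" using assms by linarith
  have pos: "0 < 1 + B / e" using B assms by (simp add: add_pos_nonneg)
  have "\<bar>1 / (1 + B / e) * m\<bar> = \<bar>m\<bar> / (1 + B / e)" using pos by (simp add: abs_mult)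
  also have "\<dots> < e"
  proof -
    have "e * \<bar>m\<bar> \<le> e * B" using assms by (intro mult_left_mono) auto
    moreover have "0 < e * e" using assms by simp
    ultimately have "e * \<bar>m\<bar> < B * e + e * e" by (simp add: mult.commute)
    then show ?thesis using pos assms by (simp add: divide_less_eq field_simps)
  qed
  finally show ?thesis .
qed

lemma Ucol_absorbing:
  assumes Lm: "L0_module M sm" and V: "V \<in> Ucol M sm T" shows "L0_absorbing M sm V"
  unfolding L0_absorbing_def
proof
  fix x
  obtain F A e where v: "wvalid M sm T F A e" and V: "V = {x. wsat M F A e x}"
    using V unfolding Ucol_iff by blast
  have em: "e \<in> borel_measurable M" and epos: "AE \<omega> in M. 0 < e \<omega>"
    using v unfolding wvalid_def by auto
  define B where "B = pmax F A x"
  have Bm: "B \<in> borel_measurable M" unfolding B_def by (rule pmax_meas[OF v])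
  define l where "l = (\<lambda>\<omega>. 1 + B \<omega> / e \<omega>)"
  have lm: "l \<in> borel_measurable M" unfolding l_def using Bm em by measurable
  have lpos: "AE \<omega> in M. 0 < l \<omega>"
    using epos AE_space by eventually_elim
      (use pmax_nonneg[OF v] in \<open>auto simp: l_def B_def intro!: add_pos_nonneg\<close>)
  define il where "il = (\<lambda>\<omega>. 1 / l \<omega>)"
  have ilm: "il \<in> borel_measurable M" unfolding il_def using lm by measurable
  define c where "c = sm il x"
  have "sm l c = sm (\<lambda>\<omega>. l \<omega> * il \<omega>) x"
    unfolding c_def by (rule sm_mult[OF Lm lm ilm, symmetric])
  also have "\<dots> = sm (\<lambda>\<omega>. 1) x"
  proof -
    have "(\<lambda>\<omega>. l \<omega> * il \<omega>) \<in> borel_measurable M" using lm ilm by measurable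
    moreover have "AE \<omega> in M. l \<omega> * il \<omega> = 1" using lpos by eventually_elim (auto simp: il_def)
    ultimately show ?thesis by (intro sm_ae[OF Lm]) auto
  qed
  also have "\<dots> = x" by (rule sm_one[OF Lm])
  finally have xc: "x = sm l c" by simp
  have "c \<in> V" unfolding V wsat_def
  proof (intro CollectI allI ballI)
    fix k \<mu> assume m: "\<mu> \<in> F k"
    have mu: "\<mu> \<in> L0_dual M sm T" by (rule wvalid_dual[OF v m])
    from dual_sm[OF mu ilm, of x] epos
    show "AE \<omega> in M. \<omega> \<in> A k \<longrightarrow> \<bar>\<mu> c \<omega>\<bar> < e \<omega>"
    proof eventually_elim
      case (elim \<omega>)
      show ?case
      proof
        assume k: "\<omega> \<in> A k"
        have "\<bar>\<mu> x \<omega>\<bar> \<le> B \<omega>" unfolding B_def by (rule pmax_ge[OF v k m])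
        from real_ineq_absorb[OF this elim(2)] show "\<bar>\<mu> c \<omega>\<bar> < e \<omega>"
          using elim(1) unfolding c_def il_def l_def by simp
      qed
    qed
  qed
  then show "\<exists>l\<in>borel_measurable M. (AE \<omega> in M. 0 < l \<omega>) \<and> (\<exists>c\<in>V. x = sm l c)"
    using lm lpos xc by blast
qed


theorem mainTheorem3:
  fixes M :: "'w measure"
    and sm :: "('w \<Rightarrow> real) \<Rightarrow> 'e::ab_group_add \<Rightarrow> 'e"
    and T :: "'e topology"
  assumes "prob_space M"
    and "stable_lc_L0_module M sm T"
  shows "\<exists>T'. stable_lc_L0_module M sm T' \<and>
    nhds_base T' 0 {weak_nbhd M F A e | F A e.
       is_partition M A \<and>
       (\<forall>k. finite (F k) \<and> F k \<noteq> {} \<and> F k \<subseteq> L0_dual M sm T) \<and>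
       e \<in> borel_measurable M \<and> (AE \<omega> in M. 0 < e \<omega>)}"
proof -
  have Lm: "L0_module M sm" and cc: "countable_concatenation M sm"
    using assms(2) unfolding stable_lc_L0_module_def topological_L0_module_def by auto
  have top: "topological_L0_module M sm (wtop M sm T)"
    unfolding topological_L0_module_def using Lm wtop_space wtop_add_cont wtop_sm_cont by blast
  have sc: "stable_collection M sm (Ucol M sm T)"
    unfolding stable_collection_def using Ucol_stable_set[OF cc] Ucol_set_concat[OF Lm cc] by blast
  have props: "\<forall>V\<in>Ucol M sm T. L0_convex M sm V \<and> L0_absorbing M sm V \<and> L0_balanced M sm V"
    using Ucol_convex Ucol_absorbing[OF Lm] Ucol_balanced by blast
  have "stable_lc_L0_module M sm (wtop M sm T)"
    unfolding stable_lc_L0_module_def using top cc wtop_nhds sc props by blast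
  moreover have "nhds_base (wtop M sm T) 0 (Ucol M sm T)" by (rule wtop_nhds)
  ultimately show ?thesis unfolding Ucol_def by blast
qed

end
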